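(* Let $\Gamma=\{f_1,\dots,f_n\}$ be a family of weight-functions invariant under translations, i.e. $f_i(x_1+\lambda,\dots,x_n+\lambda)=f_i(x_1,\dots,x_n)$ for every $i$, every $\mathbf{x}\in[0,1]^n$ and every $\lambda\in[0,1]$ with $(x_1+\lambda,\dots,x_n+\lambda)\in[0,1]^n$. Then $\mathsf{BGM}_\Gamma$ (i.e. $\mathbf{x}\mapsto\sum_i f_i(\mathbf{x})x_i$) is a pre-aggregation function which is $(k,\dots,k)$-increasing for every $k>0$.
   Context: A family of weight-functions (FWF) is a family $\Gamma=\{f_i:[0,1]^n\to[0,1]\mid 1\le i\le n\}$ with $\sum_{i=1}^n f_i(\mathbf{x})=1$ for all $\mathbf{x}\in[0,1]^n$; $\mathsf{BGM}_\Gamma(\mathbf{x})=\sum_{i=1}^n f_i(\mathbf{x})\,x_i$. For a nonzero $\mathbf{r}\in\mathbb{R}^n$, $F:[0,1]^n\to[0,1]$ is $\mathbf{r}$-increasing if $F(\mathbf{x})\le F(x_1+tr_1,\dots,x_n+tr_n)$ for all $\mathbf{x}\in[0,1]^n$ and $t>0$ with $(x_1+tr_1,\dots,x_n+tr_n)\in[0,1]^n$. $F$ is a pre-aggregation function if $F(0,\dots,0)=0$, $F(1,\dots,1)=1$ and $F$ is $\mathbf{r}$-increasing for some nonzero $\mathbf{r}\in[0,1]^n$. *)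

theory Defs
  imports "HOL-Analysis.Analysis"
begin

definition unit_cube :: "(real ^ 'n) set" where
  "unit_cube = {x. \<forall>i. x $ i \<in> {0..1}}"

definition FWF :: "('n::finite \<Rightarrow> real ^ 'n \<Rightarrow> real) \<Rightarrow> bool" where
  "FWF f \<longleftrightarrow> (\<forall>x\<in>unit_cube. (\<forall>i. f i x \<in> {0..1}) \<and> (\<Sum>i\<in>UNIV. f i x) = 1)"

definition BGM :: "('n::finite \<Rightarrow> real ^ 'n \<Rightarrow> real) \<Rightarrow> real ^ 'n \<Rightarrow> real" where
  "BGM f x = (\<Sum>i\<in>UNIV. f i x * x $ i)"

definition r_increasing :: "real ^ 'n \<Rightarrow> (real ^ 'n \<Rightarrow> real) \<Rightarrow> bool" where
  "r_increasing r F \<longleftrightarrow> r \<noteq> 0 \<and>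
     (\<forall>x\<in>unit_cube. \<forall>t>0. x + t *\<^sub>R r \<in> unit_cube \<longrightarrow> F x \<le> F (x + t *\<^sub>R r))"

definition pre_aggregation :: "(real ^ 'n \<Rightarrow> real) \<Rightarrow> bool" where
  "pre_aggregation F \<longleftrightarrow> (\<forall>x\<in>unit_cube. F x \<in> {0..1}) \<and>
     F (\<chi> i. 0) = 0 \<and> F (\<chi> i. 1) = 1 \<and>
     (\<exists>r\<in>unit_cube. r \<noteq> 0 \<and> r_increasing r F)"

end

theory Submission
  imports Defs
begin

lemma rinc:
  fixes f :: "'n::finite \<Rightarrow> real ^ 'n \<Rightarrow> real"
  assumes F: "FWF f"
    and T: "\<And>i x (l::real). x \<in> unit_cube \<Longrightarrow> l \<in> {0..1} \<Longrightarrow>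
           x + (\<chi> j. l) \<in> unit_cube \<Longrightarrow> f i (x + (\<chi> j. l)) = f i x"
    and k: "k > (0::real)"
  shows "r_increasing (\<chi> j. k) (BGM f)"
  unfolding r_increasing_def
proof (intro conjI ballI allI impI)
  show "(\<chi> j. k) \<noteq> 0" using k by (simp add: vec_eq_iff)
next
  fix x :: "real^'n" and t :: real
  assume x: "x \<in> unit_cube" and t: "t > 0" and xt: "x + t *\<^sub>R (\<chi> j. k) \<in> unit_cube"
  define l where "l = t * k"
  have eq: "x + t *\<^sub>R (\<chi> j. k) = x + (\<chi> j. l)" by (simp add: vec_eq_iff l_def)
  obtain i0 :: 'n where True by simp
  have "x $ i0 \<ge> 0" using x by (auto simp: unit_cube_def)
  moreover have "x $ i0 + l \<le> 1" using xt by (auto simp: unit_cube_def eq)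
  moreover have "l > 0" using t k by (simp add: l_def)
  ultimately have l01: "l \<in> {0..1}" by auto
  have xl: "x + (\<chi> j. l) \<in> unit_cube" using xt eq by simp
  have "BGM f (x + (\<chi> j. l)) = (\<Sum>i\<in>UNIV. f i x * (x $ i + l))"
    unfolding BGM_def using T[OF x l01 xl] by simp
  also have "\<dots> = BGM f x + l * (\<Sum>i\<in>UNIV. f i x)"
    by (simp add: BGM_def algebra_simps sum.distrib sum_distrib_left)
  also have "\<dots> = BGM f x + l" using F x by (simp add: FWF_def)
  finally show "BGM f x \<le> BGM f (x + t *\<^sub>R (\<chi> j. k))" using eq \<open>l > 0\<close> by simp
qed

theorem corollary2:
  fixes f :: "'n::finite \<Rightarrow> real ^ 'n \<Rightarrow> real"
  assumes "FWF f"
    and "\<And>i x (l::real). x \<in> unit_cube \<Longrightarrow> l \<in> {0..1} \<Longrightarrow>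
           x + (\<chi> j. l) \<in> unit_cube \<Longrightarrow> f i (x + (\<chi> j. l)) = f i x"
  shows "pre_aggregation (BGM f) \<and> (\<forall>k::real>0. r_increasing (\<chi> j. k) (BGM f))"
proof -
  have R: "\<forall>k::real>0. r_increasing (\<chi> j. k) (BGM f)" using rinc[OF assms] by blast
  have range: "\<forall>x\<in>unit_cube. BGM f x \<in> {0..1}"
  proof
    fix x :: "real^'n" assume x: "x \<in> unit_cube"
    have w: "\<And>i. f i x \<in> {0..1}" and s: "(\<Sum>i\<in>UNIV. f i x) = 1"
      using assms(1) x by (auto simp: FWF_def)
    have xi: "\<And>i. x $ i \<in> {0..1}" using x by (auto simp: unit_cube_def)
    have "BGM f x \<ge> 0" unfolding BGM_def
      using w xi by (intro sum_nonneg) auto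
    moreover have "BGM f x \<le> (\<Sum>i\<in>UNIV. f i x)" unfolding BGM_def
      using w xi by (intro sum_mono) (auto intro: mult_left_le)
    ultimately show "BGM f x \<in> {0..1}" using s by simp
  qed
  have c1: "((\<chi> i. 1)::real^'n) \<in> unit_cube" by (simp add: unit_cube_def)
  have "BGM f (\<chi> i. 0) = 0" by (simp add: BGM_def)
  moreover have "BGM f (\<chi> i. 1) = 1" using assms(1) c1 by (simp add: BGM_def FWF_def)
  moreover have "((\<chi> i. 1)::real^'n) \<noteq> 0" by (simp add: vec_eq_iff)
  ultimately show ?thesis unfolding pre_aggregation_def using R range c1 by auto
qed

end
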